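(* Let $\mathbb{K}$ be a field of characteristic zero, let $u,v,t,w\in\mathbb{K}$ with $wt\neq0$, let $a_1,\dots,a_\ell\in\mathbb{K}$, and let $\alpha_1\le\dots\le\alpha_\ell$, $\beta_1,\dots,\beta_\ell$, $\gamma_1,\dots,\gamma_\ell$ be nonnegative integers. Let \[P=\sum_{j=1}^\ell a_jX^{\alpha_j}(vX+t)^{\beta_j}(uX+w)^{\gamma_j}.\] If $P\neq0$, then $\operatorname{val}(P)\le\max_{1\le j\le\ell}\left(\alpha_j+2\binom{\ell+1-j}{2}\right)$.
   Context: For a nonzero polynomial $P$, $\operatorname{val}(P)$ is the largest integer $v$ such that $X^v$ divides $P$. *)

theory Defs
  imports "HOL-Computational_Algebra.Polynomial"
begin

definition val :: "'a::comm_semiring_1 poly \<Rightarrow> nat" where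
  "val P = (GREATEST v. [:0, 1:] ^ v dvd P)"

end

theory Submission
  imports "Jordan_Normal_Form.Determinant" Defs
begin

lemma mult_pderiv_power: "q * pderiv (q ^ n) = smult (of_nat n) (q ^ n * pderiv q)"
proof (cases n)
  case (Suc m)
  show ?thesis unfolding Suc pderiv_power_Suc
    by (simp only: mult_smult_right mult_smult_left power_Suc) (simp add: algebra_simps)
qed simp

lemma coeff_X_pow_mult': "coeff ([:0,1:] ^ e * r) e = coeff (r :: 'a::comm_ring_1 poly) 0"
proof -
  have h: "[:0,1:] ^ e = (monom 1 e :: 'a poly)" by (simp add: monom_altdef)
  show ?thesis unfolding h by (simp add: coeff_monom_mult)
qed

lemma coeff_mult_dvd:
  fixes p q :: "'a::comm_ring_1 poly"
  assumes "[:0,1:] ^ m dvd p" "[:0,1:] ^ n dvd q"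
  shows "[:0,1:] ^ (m + n) dvd p * q \<and> coeff (p * q) (m + n) = coeff p m * coeff q n"
proof -
  from assms obtain p' q' where p: "p = [:0,1:] ^ m * p'" and q: "q = [:0,1:] ^ n * q'"
    by (auto elim!: dvdE)
  have pq: "p * q = [:0,1:] ^ (m + n) * (p' * q')" unfolding p q power_add by (simp add: algebra_simps)
  show ?thesis unfolding pq
    by (simp add: coeff_X_pow_mult' coeff_mult_0 p q)
qed

lemma coeff_prod_dvd:
  fixes a :: "'b \<Rightarrow> 'a::comm_ring_1 poly"
  assumes "finite S" "\<And>i. i \<in> S \<Longrightarrow> [:0,1:] ^ n i dvd a i"
  shows "[:0,1:] ^ (\<Sum>i\<in>S. n i) dvd (\<Prod>i\<in>S. a i) \<and>
         coeff (\<Prod>i\<in>S. a i) (\<Sum>i\<in>S. n i) = (\<Prod>i\<in>S. coeff (a i) (n i))"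
  using assms
proof (induction S rule: finite_induct)
  case empty
  then show ?case by simp
next
  case (insert x F)
  then have h: "[:0,1:] ^ (\<Sum>i\<in>F. n i) dvd (\<Prod>i\<in>F. a i) \<and>
         coeff (\<Prod>i\<in>F. a i) (\<Sum>i\<in>F. n i) = (\<Prod>i\<in>F. coeff (a i) (n i))" by auto
  have "[:0,1:] ^ n x dvd a x" using insert by auto
  from coeff_mult_dvd[OF this conjunct1[OF h]] h insert(1,2)
  show ?case by simp
qed

lemma det_dvd_coeff:
  fixes A :: "'a::comm_ring_1 poly mat"
  assumes A: "A \<in> carrier_mat k k"
    and dv: "\<And>s i. s < k \<Longrightarrow> i < k \<Longrightarrow> [:0,1:] ^ e i dvd A $$ (s, i)"
  shows "[:0,1:] ^ (\<Sum>i\<in>{0..<k}. e i) dvd det A \<and>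
         coeff (det A) (\<Sum>i\<in>{0..<k}. e i) = det (mat k k (\<lambda>(s,i). coeff (A $$ (s, i)) (e i)))"
proof -
  let ?N = "\<Sum>i\<in>{0..<k}. e i"
  have trm: "[:0,1:] ^ ?N dvd (\<Prod>s = 0..<k. A $$ (s, p s)) \<and>
     coeff (\<Prod>s = 0..<k. A $$ (s, p s)) ?N = (\<Prod>s = 0..<k. coeff (A $$ (s, p s)) (e (p s)))"
    if p: "p permutes {0..<k}" for p
  proof -
    have sp: "(\<Sum>s\<in>{0..<k}. e (p s)) = ?N"
      using sum.permute[OF p, of e] by (simp add: comp_def)
    have "\<And>s. s \<in> {0..<k} \<Longrightarrow> [:0,1:] ^ e (p s) dvd A $$ (s, p s)"
      using dv p by (auto simp: permutes_in_image)
    from coeff_prod_dvd[where S="{0..<k}" and n="\<lambda>s. e (p s)" and a="\<lambda>s. A $$ (s, p s)", OF _ this] sp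
    show ?thesis by simp
  qed
  have c: "coeff (signof p * Q) n = signof p * coeff Q n" for p and Q :: "'a poly" and n
    by (simp add: of_int_poly)
  show ?thesis
  proof
    show "[:0,1:] ^ ?N dvd det A"
      unfolding det_def'[OF A] using trm by (auto intro!: dvd_sum dvd_mult)
    show "coeff (det A) ?N = det (mat k k (\<lambda>(s,i). coeff (A $$ (s, i)) (e i)))"
      unfolding det_def'[OF A] det_def'[OF mat_carrier] coeff_sum c
      using trm by (intro sum.cong refl) (auto simp: permutes_in_image intro!: prod.cong)
  qed
qed

lemma vandermonde_nz:
  fixes x c :: "nat \<Rightarrow> 'a::field"
  assumes inj: "inj_on x {0..<k}" and c: "\<And>i. i < k \<Longrightarrow> c i \<noteq> 0"
  shows "det (mat k k (\<lambda>(s,i). x i ^ s * c i)) \<noteq> 0"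
proof
  let ?N = "mat k k (\<lambda>(s,i). x i ^ s * c i)"
  assume "det ?N = 0"
  then have "det (transpose_mat ?N) = 0" using det_transpose[of ?N k] by simp
  then obtain vv where vv: "vv \<in> carrier_vec k" "vv \<noteq> 0\<^sub>v k" "transpose_mat ?N *\<^sub>v vv = 0\<^sub>v k"
    using det_0_iff_vec_prod_zero_field[of "transpose_mat ?N" k] by auto
  define p where "p = (\<Sum>s<k. monom (vv $ s) s)"
  have root: "poly p (x i) = 0" if i: "i < k" for i
  proof -
    have "(transpose_mat ?N *\<^sub>v vv) $ i = 0" using vv(3) i by simp
    then have "(\<Sum>s\<in>{0..<k}. x i ^ s * c i * vv $ s) = 0"
      using i vv(1) by (simp add: scalar_prod_def)
    then have "c i * (\<Sum>s\<in>{0..<k}. vv $ s * x i ^ s) = 0"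
      by (simp add: sum_distrib_left algebra_simps)
    then have "(\<Sum>s\<in>{0..<k}. vv $ s * x i ^ s) = 0" using c[OF i] by simp
    then show ?thesis by (simp add: p_def poly_sum poly_monom atLeast0LessThan)
  qed
  show False
  proof (cases "p = 0")
    case True
    have "vv = 0\<^sub>v k"
    proof (rule eq_vecI)
      fix s assume "s < dim_vec (0\<^sub>v k :: 'a vec)"
      then have s: "s < k" by simp
      have "coeff p s = vv $ s" unfolding p_def coeff_sum
        using s by (simp add: coeff_monom)
      then show "vv $ s = 0\<^sub>v k $ s" using True s by simp
    qed (use vv(1) in simp)
    then show False using vv(2) by simp
  next
    case False
    have dp: "degree p < k \<or> k = 0"
    proof (cases k)
      case (Suc k')
      have "degree p \<le> k'" unfolding p_def
        by (rule degree_sum_le) (auto simp: Suc degree_monom_le intro: order.trans[OF degree_monom_le])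
      then show ?thesis using Suc by simp
    qed simp
    have "x ` {0..<k} \<subseteq> {y. poly p y = 0}" using root by auto
    then have "card (x ` {0..<k}) \<le> card {y. poly p y = 0}"
      by (intro card_mono poly_roots_finite False)
    also have "\<dots> \<le> degree p" by (rule card_poly_roots_bound[OF False])
    finally have "k \<le> degree p" using card_image[OF inj] by simp
    with dp have "k = 0" by simp
    with vv(1,2) show False by auto
  qed
qed

lemma degree_det_le:
  fixes A :: "'a::comm_ring_1 poly mat"
  assumes A: "A \<in> carrier_mat k k"
    and dg: "\<And>s i. s < k \<Longrightarrow> i < k \<Longrightarrow> degree (A $$ (s, i)) \<le> d s"
  shows "degree (det A) \<le> (\<Sum>s\<in>{0..<k}. d s)"
  unfolding det_def'[OF A]
proof (rule degree_sum_le)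
  fix p assume "p \<in> {p. p permutes {0..<k}}"
  then have p: "p permutes {0..<k}" by simp
  have "degree (\<Prod>s = 0..<k. A $$ (s, p s)) \<le> (\<Sum>s\<in>{0..<k}. degree (A $$ (s, p s)))"
    using degree_prod_sum_le[of "{0..<k}" "\<lambda>s. A $$ (s, p s)"] by (simp add: comp_def)
  also have "\<dots> \<le> (\<Sum>s\<in>{0..<k}. d s)"
    using dg p by (intro sum_mono) (auto simp: permutes_in_image)
  finally show "degree (signof p * (\<Prod>s = 0..<k. A $$ (s, p s))) \<le> (\<Sum>s\<in>{0..<k}. d s)"
    by (simp add: of_int_poly order.trans[OF degree_smult_le])
qed (simp add: finite_permutations)

lemma coeff_order_nz:
  fixes p :: "'a::field poly"
  assumes "p \<noteq> 0"
  shows "coeff p (order 0 p) \<noteq> 0"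
proof
  assume c: "coeff p (order 0 p) = 0"
  obtain r where r: "p = [:0,1:] ^ order 0 p * r"
    using order_1[of 0 p] by (auto elim: dvdE)
  have "coeff r 0 = 0" using c coeff_X_pow_mult'[of "order 0 p" r] r by simp
  then have "poly r 0 = 0" by (simp add: poly_0_coeff_0)
  then have "[:0,1:] dvd r" by (simp add: poly_eq_0_iff_dvd)
  then obtain r' where r': "r = [:0,1:] * r'" by (auto elim: dvdE)
  have h: "[:0,1:] ^ Suc (order 0 p) dvd [:0,1:] ^ order 0 p * r"
  proof (rule dvdI[of _ _ r'])
    show "[:0,1:] ^ order 0 p * r = [:0,1:] ^ Suc (order 0 p) * r'"
      unfolding r' power_Suc2 by (simp only: mult.assoc)
  qed
  have "[:0,1:] ^ Suc (order 0 p) dvd p" using h by (simp only: r[symmetric])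
  then show False using order_2[OF assms, of 0] by simp
qed

lemma smult_sum_right: "smult c (sum f A) = (\<Sum>x\<in>A. smult c (f x))"
  by (induction A rule: infinite_finite_induct) (auto simp: smult_add_right)

lemma X_pow_Suc_dvdI:
  fixes p :: "'a::comm_ring_1 poly"
  assumes "[:0,1:] ^ e dvd p" "coeff p e = 0"
  shows "[:0,1:] ^ Suc e dvd p"
proof -
  obtain r where r: "p = [:0,1:] ^ e * r" using assms(1) by (auto elim: dvdE)
  have "coeff r 0 = 0" using assms(2) coeff_X_pow_mult'[of e r] r by simp
  then have "poly r 0 = 0" by (simp add: poly_0_coeff_0)
  then have "[:0,1:] dvd r" by (simp add: poly_eq_0_iff_dvd)
  then obtain r' where r': "r = [:0,1:] * r'" by (auto elim: dvdE)
  show ?thesis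
  proof (rule dvdI[of _ _ r'])
    show "p = [:0,1:] ^ Suc e * r'" unfolding r r' power_Suc2 by (simp only: mult.assoc)
  qed
qed

definition comb :: "(nat \<Rightarrow> 'a::field poly) \<Rightarrow> nat \<Rightarrow> (nat \<Rightarrow> 'a) \<Rightarrow> 'a poly" where
  "comb f k c = (\<Sum>j\<in>{0..<k}. smult (c j) (f j))"

definition indep :: "(nat \<Rightarrow> 'a::field poly) \<Rightarrow> nat \<Rightarrow> bool" where
  "indep f k \<longleftrightarrow> (\<forall>c. comb f k c = 0 \<longrightarrow> (\<forall>j<k. c j = 0))"

lemma comb_diff_smult: "comb f k (\<lambda>j. c j - l * d j) = comb f k c - smult l (comb f k d)"
  by (simp add: comb_def smult_diff_left sum_subtractf smult_sum_right)

lemma comb_nz: "indep f k \<Longrightarrow> m < k \<Longrightarrow> c m \<noteq> 0 \<Longrightarrow> comb f k c \<noteq> 0"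
  unfolding indep_def by auto

lemma ADJ:
  fixes f :: "nat \<Rightarrow> 'a::field poly"
  assumes ind: "indep f k" and mk: "m < k"
    and rows: "\<And>i j. m < i \<Longrightarrow> i < k \<Longrightarrow> j \<le> m \<Longrightarrow> C i j = 0"
    and rownz: "\<And>i. m < i \<Longrightarrow> i < k \<Longrightarrow> comb f k (C i) \<noteq> 0"
    and cz: "cz m \<noteq> 0"
  shows "\<exists>c. (\<forall>j\<le>m. c j = cz j) \<and> (\<forall>i. m < i \<and> i < k \<longrightarrow> order 0 (comb f k c) \<noteq> order 0 (comb f k (C i)))
     \<and> order 0 (comb f k cz) \<le> order 0 (comb f k c)"
proof -
  let ?o = "\<lambda>c. order 0 (comb f k c)"
  let ?N = "\<lambda>c. card {i\<in>{m<..<k}. ?o c \<le> ?o (C i)}"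
  have main: "\<And>c. (\<forall>j\<le>m. c j = cz j) \<Longrightarrow> ?o cz \<le> ?o c \<Longrightarrow> ?N c = n \<Longrightarrow>
     \<exists>c'. (\<forall>j\<le>m. c' j = cz j) \<and> (\<forall>i. m < i \<and> i < k \<longrightarrow> ?o c' \<noteq> ?o (C i)) \<and> ?o cz \<le> ?o c'" for n
  proof (induction n rule: less_induct)
    case (less n c)
    show ?case
    proof (cases "\<exists>i. m < i \<and> i < k \<and> ?o c = ?o (C i)")
      case False
      then show ?thesis using less.prems by blast
    next
      case True
      then obtain i where i: "m < i" "i < k" "?o c = ?o (C i)" by blast
      define e where "e = ?o c"
      define p where "p = comb f k c"
      define q where "q = comb f k (C i)"
      have pnz: "p \<noteq> 0" unfolding p_def using comb_nz[OF ind mk, of c] less.prems(1) cz by auto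
      have qnz: "q \<noteq> 0" unfolding q_def using rownz i by auto
      have dp: "[:0,1:] ^ e dvd p" unfolding e_def p_def using order_1[of 0 "comb f k c"] by simp
      have dq: "[:0,1:] ^ e dvd q" unfolding e_def q_def i(3) using order_1[of 0 "comb f k (C i)"] by simp
      have cq: "coeff q e \<noteq> 0" unfolding e_def q_def i(3) by (rule coeff_order_nz[OF qnz[unfolded q_def]])
      define l where "l = coeff p e / coeff q e"
      define c' where "c' = (\<lambda>j. c j - l * C i j)"
      have cc': "comb f k c' = p - smult l q" unfolding c'_def p_def q_def by (rule comb_diff_smult)
      have c'm: "\<forall>j\<le>m. c' j = cz j" using less.prems(1) rows i by (simp add: c'_def)
      have c'nz: "comb f k c' \<noteq> 0" using comb_nz[OF ind mk, of c'] c'm cz by auto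
      have "[:0,1:] ^ e dvd comb f k c'" unfolding cc' using dp dq by (simp add: dvd_diff dvd_smult)
      moreover have "coeff (comb f k c') e = 0" unfolding cc' l_def using cq by simp
      ultimately have "[:0,1:] ^ Suc e dvd comb f k c'" by (rule X_pow_Suc_dvdI)
      then have gt: "e < ?o c'" using c'nz order_divides[of 0 "Suc e" "comb f k c'"] by simp
      have sub: "{j\<in>{m<..<k}. ?o c' \<le> ?o (C j)} \<subseteq> {j\<in>{m<..<k}. ?o c \<le> ?o (C j)} - {i}"
        using gt i unfolding e_def by auto
      have "?N c' < ?N c"
      proof -
        have "?N c' \<le> card ({j\<in>{m<..<k}. ?o c \<le> ?o (C j)} - {i})" by (rule card_mono[OF _ sub]) simp
        also have "\<dots> < ?N c" using i by (intro card_Diff1_less) auto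
        finally show ?thesis .
      qed
      then have "?N c' < n" using less.prems(3) by simp
      from less.IH[OF this c'm _ refl] show ?thesis using less.prems(2) gt unfolding e_def by simp
    qed
  qed
  show ?thesis by (rule main[of cz, OF _ _ refl]) simp_all
qed

lemma BUILD:
  fixes f :: "nat \<Rightarrow> 'a::field poly" and init :: "nat \<Rightarrow> nat \<Rightarrow> 'a"
  assumes ind: "indep f k"
    and initd: "\<And>i. i < k \<Longrightarrow> init i i \<noteq> 0"
    and initl: "\<And>i j. i < k \<Longrightarrow> j < i \<Longrightarrow> init i j = 0"
  shows "n \<le> k \<Longrightarrow> \<exists>C. (\<forall>i. k - n \<le> i \<and> i < k \<longrightarrow> (\<forall>j\<le>i. C i j = init i j) \<and>
            order 0 (comb f k (init i)) \<le> order 0 (comb f k (C i))) \<and>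
         (\<forall>i i'. k - n \<le> i \<and> i < k \<and> k - n \<le> i' \<and> i' < k \<and> i \<noteq> i' \<longrightarrow>
            order 0 (comb f k (C i)) \<noteq> order 0 (comb f k (C i')))"
proof (induction n)
  case 0
  then show ?case by auto
next
  case (Suc n)
  define m where "m = k - Suc n"
  have mk: "m < k" and km: "k - n = Suc m" using Suc.prems by (auto simp: m_def)
  from Suc.IH Suc.prems obtain C where
    C1: "\<forall>i. Suc m \<le> i \<and> i < k \<longrightarrow> (\<forall>j\<le>i. C i j = init i j) \<and>
            order 0 (comb f k (init i)) \<le> order 0 (comb f k (C i))" and
    C2: "\<forall>i i'. Suc m \<le> i \<and> i < k \<and> Suc m \<le> i' \<and> i' < k \<and> i \<noteq> i' \<longrightarrow>
            order 0 (comb f k (C i)) \<noteq> order 0 (comb f k (C i'))"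
    unfolding km by auto
  have rows: "C i j = 0" if "m < i" "i < k" "j \<le> m" for i j
    using C1 that initl[of i j] by auto
  have rownz: "comb f k (C i) \<noteq> 0" if "m < i" "i < k" for i
    using comb_nz[OF ind that(2), of "C i"] C1 that initd[of i] by auto
  obtain c where c1: "\<forall>j\<le>m. c j = init m j"
    and c2: "\<forall>i. m < i \<and> i < k \<longrightarrow> order 0 (comb f k c) \<noteq> order 0 (comb f k (C i))"
    and c3: "order 0 (comb f k (init m)) \<le> order 0 (comb f k c)"
    using ADJ[where C=C and cz="init m", OF ind mk rows rownz initd[OF mk]] by blast
  define C' where "C' = C(m := c)"
  have A: "(\<forall>j\<le>i. C' i j = init i j) \<and> order 0 (comb f k (init i)) \<le> order 0 (comb f k (C' i))"
    if i: "k - Suc n \<le> i \<and> i < k" for i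
  proof -
    from i have "i = m \<or> Suc m \<le> i" by (auto simp: m_def)
    then show ?thesis using C1 c1 c3 i by (auto simp: C'_def)
  qed
  have B: "order 0 (comb f k (C' i)) \<noteq> order 0 (comb f k (C' i'))"
    if ii: "k - Suc n \<le> i \<and> i < k \<and> k - Suc n \<le> i' \<and> i' < k \<and> i \<noteq> i'" for i i'
  proof -
    from ii have h: "(i = m \<or> Suc m \<le> i) \<and> (i' = m \<or> Suc m \<le> i')" by (auto simp: m_def)
    show ?thesis
    proof (cases "i = m")
      case True
      then have "Suc m \<le> i'" using h ii by auto
      then show ?thesis using True c2 ii unfolding C'_def by auto
    next
      case False
      note F = this
      show ?thesis
      proof (cases "i' = m")
        case True
        then have "Suc m \<le> i" using h F by auto
        then show ?thesis using True F c2 ii unfolding C'_def by (metis Suc_le_eq fun_upd_other fun_upd_same)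
      next
        case False
        then show ?thesis using F h C2 ii unfolding C'_def by auto
      qed
    qed
  qed
  show ?case using A B by blast
qed

locale wr =
  fixes u v t w :: "'a::field_char_0"
  assumes wt: "w * t \<noteq> 0"
begin

definition Mq :: "'a poly" where
  "Mq = [:0,1:] * [:t,v:] * [:w,u:]"

definition Dop :: "'a poly \<Rightarrow> 'a poly" where
  "Dop q = Mq * pderiv q"

definition fterm :: "nat \<Rightarrow> nat \<Rightarrow> nat \<Rightarrow> 'a poly" where
  "fterm a b c = [:0,1:] ^ a * [:t,v:] ^ b * [:w,u:] ^ c"

definition Lq :: "nat \<Rightarrow> nat \<Rightarrow> nat \<Rightarrow> 'a poly" where
  "Lq a b c = of_nat a * ([:t,v:] * [:w,u:]) + of_nat b * ([:0,1:] * [:v:] * [:w,u:])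
     + of_nat c * ([:0,1:] * [:u:] * [:t,v:])"

lemma smult_of_nat_eq: "smult (of_nat n) p = (of_nat n :: 'a poly) * p"
  by (simp add: of_nat_poly)

lemma Dop_fterm: "Dop (fterm a b c) = fterm a b c * Lq a b c"
proof -
  have 1: "[:0,1:] * pderiv ([:0,1:] ^ a) = of_nat a * ([:0,1::'a:] ^ a)"
    using mult_pderiv_power[of "[:0,1::'a:]" a] by (simp add: pderiv_pCons smult_of_nat_eq)
  have 2: "[:t,v:] * pderiv ([:t,v:] ^ b) = of_nat b * ([:t,v:] ^ b * [:v:])"
    using mult_pderiv_power[of "[:t,v:]" b] by (simp add: pderiv_pCons of_nat_poly mult.commute)
  have 3: "[:w,u:] * pderiv ([:w,u:] ^ c) = of_nat c * ([:w,u:] ^ c * [:u:])"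
    using mult_pderiv_power[of "[:w,u:]" c] by (simp add: pderiv_pCons of_nat_poly mult.commute)
  have alg: "X*p1*p2*(A'*B*C + A*B'*C + A*B*C') = A*B*C*(an*(p1*p2) + bn*(X*V*p2) + cn*(X*U*p1))"
    if "X*A' = an*A" "p1*B' = bn*(B*V)" "p2*C' = cn*(C*U)"
    for X p1 p2 A B C A' B' C' V U an bn cn :: "'a poly"
  proof -
    have "X*p1*p2*(A'*B*C + A*B'*C + A*B*C') = p1*p2*B*C*(X*A') + X*p2*A*C*(p1*B') + X*p1*A*B*(p2*C')"
      by (simp add: algebra_simps)
    also have "\<dots> = p1*p2*B*C*(an*A) + X*p2*A*C*(bn*(B*V)) + X*p1*A*B*(cn*(C*U))"
      unfolding that ..
    finally show ?thesis by (simp add: algebra_simps)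
  qed
  show ?thesis
    unfolding Dop_def Mq_def fterm_def Lq_def pderiv_mult
    using alg[OF 1 2 3] by (simp add: algebra_simps)
qed

lemma Dop_add: "Dop (p + q) = Dop p + Dop q"
  by (simp add: Dop_def pderiv_add algebra_simps)
lemma Dop_smult: "Dop (smult c p) = smult c (Dop p)"
  by (simp add: Dop_def pderiv_smult)
lemma Dop_0[simp]: "Dop 0 = 0"
  by (simp add: Dop_def)
lemma Dop_mult: "Dop (p * q) = Dop p * q + p * Dop q"
  by (simp add: Dop_def pderiv_mult algebra_simps)
lemma Dop_sum: "Dop (sum f A) = (\<Sum>x\<in>A. Dop (f x))"
  by (induction A rule: infinite_finite_induct) (auto simp: Dop_add)
lemma Dop_pow_sum_smult:
  "(Dop ^^ s) (\<Sum>j\<in>A. smult (c j) (g j)) = (\<Sum>j\<in>A. smult (c j) ((Dop ^^ s) (g j)))"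
  by (induction s) (auto simp: Dop_sum Dop_smult)

lemma Dop_fterm_mult: "Dop (fterm a b c * q) = fterm a b c * (Lq a b c * q + Dop q)"
  by (simp add: Dop_mult Dop_fterm algebra_simps)

lemma degree_Lq: "degree (Lq a b c) \<le> 2"
proof -
  have d: "degree ((of_nat n :: 'a poly) * p) \<le> degree p" for n p
    by (simp add: of_nat_poly degree_smult_le)
  have e1: "degree ([:t,v:] * [:w,u:]) \<le> 2"
    by (rule order.trans[OF degree_mult_le]) auto
  have e2: "degree ([:0,1:] * [:v:] * [:w,u:]) \<le> 2"
    by (rule order.trans[OF degree_mult_le]) (auto intro: order.trans[OF degree_mult_le])
  have e3: "degree ([:0,1:] * [:u:] * [:t,v:]) \<le> 2"
    by (rule order.trans[OF degree_mult_le]) (auto intro: order.trans[OF degree_mult_le])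
  show ?thesis unfolding Lq_def
    by (intro degree_add_le order.trans[OF d] e1 e2 e3)
qed

lemma degree_Dop: "degree (Dop q) \<le> degree q + 2"
proof (cases "degree q = 0")
  case True
  then have "pderiv q = 0" by (simp add: pderiv_eq_0_iff)
  then show ?thesis by (simp add: Dop_def)
next
  case False
  have "degree (Dop q) \<le> degree ([:0,1:] * [:t,v:] * [:w,u:]) + degree (pderiv q)"
    unfolding Dop_def Mq_def by (rule degree_mult_le)
  also have "degree ([:0,1:] * [:t,v:] * [:w,u::'a:]) \<le> 3"
    by (rule order.trans[OF degree_mult_le]) (auto intro: order.trans[OF degree_mult_le])
  finally show ?thesis using False by (simp add: degree_pderiv)
qed

primrec Qs :: "nat \<Rightarrow> nat \<Rightarrow> nat \<Rightarrow> nat \<Rightarrow> 'a poly" where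
  "Qs a b c 0 = 1"
| "Qs a b c (Suc s) = Lq a b c * Qs a b c s + Dop (Qs a b c s)"

lemma Dop_pow_fterm: "(Dop ^^ s) (fterm a b c) = fterm a b c * Qs a b c s"
  by (induction s) (auto simp: Dop_fterm_mult)

lemma degree_Qs: "degree (Qs a b c s) \<le> 2 * s"
proof (induction s)
  case (Suc s)
  have "degree (Lq a b c * Qs a b c s) \<le> 2 + 2 * s"
    by (rule order.trans[OF degree_mult_le]) (use Suc degree_Lq[of a b c] in auto)
  moreover have "degree (Dop (Qs a b c s)) \<le> 2 + 2 * s"
    using degree_Dop[of "Qs a b c s"] Suc by simp
  ultimately show ?case by (auto intro: degree_add_le)
qed simp

lemma X_pow_fterm: "[:0,1:] ^ e = fterm e 0 0"
  by (simp add: fterm_def)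

lemma coeff_X_pow_mult: "coeff ([:0,1:] ^ e * r) e = coeff (r :: 'a poly) 0"
proof -
  have h: "[:0,1:] ^ e = (monom 1 e :: 'a poly)" by (simp add: monom_altdef)
  show ?thesis unfolding h by (simp add: coeff_monom_mult)
qed

lemma Dop_dvd_coeff:
  assumes "[:0,1:] ^ e dvd q"
  shows "[:0,1:] ^ e dvd Dop q \<and> coeff (Dop q) e = of_nat e * (t * w) * coeff q e"
proof -
  from assms obtain r where q: "q = [:0,1:] ^ e * r" by (auto elim: dvdE)
  have D: "Dop q = [:0,1:] ^ e * (Lq e 0 0 * r + Dop r)"
    unfolding q X_pow_fterm by (rule Dop_fterm_mult)
  have cz: "coeff (Dop r) 0 = 0" by (simp add: Dop_def Mq_def coeff_mult_0)
  have cL: "coeff (Lq e 0 0) 0 = of_nat e * (t * w)"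
    by (simp add: Lq_def coeff_mult_0 of_nat_poly)
  show ?thesis
    using D cz cL by (simp add: coeff_X_pow_mult q coeff_mult_0)
qed

lemma Dop_pow_dvd_coeff:
  assumes "[:0,1:] ^ e dvd q"
  shows "[:0,1:] ^ e dvd (Dop ^^ s) q \<and> coeff ((Dop ^^ s) q) e = (of_nat e * (t * w)) ^ s * coeff q e"
  by (induction s) (use assms Dop_dvd_coeff in auto)

lemma tw_nz: "t \<noteq> 0" "w \<noteq> 0" using wt by auto

lemma fterm_nz: "fterm a b c \<noteq> 0"
  using tw_nz by (simp add: fterm_def)

lemma order_fterm: "order 0 (fterm a b c) = a"
proof -
  have R: "[:t,v:] ^ b * [:w,u:] ^ c \<noteq> 0" "poly ([:t,v:] ^ b * [:w,u:] ^ c) 0 \<noteq> 0"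
    using tw_nz by simp_all
  have "fterm a b c = [:0,1:] ^ a * ([:t,v:] ^ b * [:w,u:] ^ c)"
    by (simp add: fterm_def mult.assoc)
  moreover have "order 0 ([:0,1::'a:] ^ a) = a" using order_power_n_n[of "0::'a" a] by simp
  ultimately show ?thesis using R order_mult[of "[:0,1:] ^ a" "[:t,v:] ^ b * [:w,u:] ^ c" 0]
    by (simp add: order_0I)
qed

lemma GL:
  fixes \<alpha> \<beta> \<gamma> :: "nat \<Rightarrow> nat" and C :: "nat \<Rightarrow> nat \<Rightarrow> 'a" and g :: "nat \<Rightarrow> 'a poly"
  assumes g: "\<And>i. i < k \<Longrightarrow> g i = (\<Sum>j\<in>{0..<k}. smult (C i j) (fterm (\<alpha> j) (\<beta> j) (\<gamma> j)))"
    and diag: "\<And>i. i < k \<Longrightarrow> C i i \<noteq> 0"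
    and low: "\<And>i j. i < k \<Longrightarrow> j < i \<Longrightarrow> C i j = 0"
    and gnz: "\<And>i. i < k \<Longrightarrow> g i \<noteq> 0"
    and inj: "inj_on (\<lambda>i. order 0 (g i)) {0..<k}"
  shows "(\<Sum>i\<in>{0..<k}. order 0 (g i)) \<le> (\<Sum>i\<in>{0..<k}. \<alpha> i) + (\<Sum>s\<in>{0..<k}. 2 * s)"
proof -
  define f where "f = (\<lambda>j. fterm (\<alpha> j) (\<beta> j) (\<gamma> j))"
  define e where "e = (\<lambda>i. order 0 (g i))"
  define Wg where "Wg = mat k k (\<lambda>(s,i). (Dop ^^ s) (g i))"
  define Wf where "Wf = mat k k (\<lambda>(s,i). (Dop ^^ s) (f i))"
  define Cm where "Cm = mat k k (\<lambda>(j,i). [:C i j:])"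
  define Qm where "Qm = mat k k (\<lambda>(s,j). Qs (\<alpha> j) (\<beta> j) (\<gamma> j) s)"
  define Dg where "Dg = mat k k (\<lambda>(i,j). if i = j then f j else 0)"
  have car: "Wg \<in> carrier_mat k k" "Wf \<in> carrier_mat k k" "Cm \<in> carrier_mat k k"
    "Qm \<in> carrier_mat k k" "Dg \<in> carrier_mat k k"
    unfolding Wg_def Wf_def Cm_def Qm_def Dg_def by auto
  have Wg_eq: "Wg = Wf * Cm"
  proof (rule eq_matI)
    fix s i assume si: "s < dim_row (Wf * Cm)" "i < dim_col (Wf * Cm)"
    then have s: "s < k" and i: "i < k" using car by auto
    have "(Wf * Cm) $$ (s, i) = (\<Sum>j\<in>{0..<k}. (Dop ^^ s) (f j) * [:C i j:])"
      using s i car by (simp add: scalar_prod_def Wf_def Cm_def)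
    also have "\<dots> = (Dop ^^ s) (g i)"
      using i by (simp add: g f_def Dop_pow_sum_smult mult.commute)
    finally show "Wg $$ (s, i) = (Wf * Cm) $$ (s, i)" using s i by (simp add: Wg_def)
  qed (use car in auto)
  have Wf_eq: "Wf = Qm * Dg"
  proof (rule eq_matI)
    fix s i assume si: "s < dim_row (Qm * Dg)" "i < dim_col (Qm * Dg)"
    then have s: "s < k" and i: "i < k" using car by auto
    have "(Qm * Dg) $$ (s, i) = (\<Sum>j\<in>{0..<k}. Qs (\<alpha> j) (\<beta> j) (\<gamma> j) s * (if j = i then f i else 0))"
      using s i car by (simp add: scalar_prod_def Qm_def Dg_def)
    also have "\<dots> = Qs (\<alpha> i) (\<beta> i) (\<gamma> i) s * f i"
      using i by (simp add: if_distrib[of "\<lambda>x. _ * x"] cong: if_cong)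
    finally show "Wf $$ (s, i) = (Qm * Dg) $$ (s, i)"
      using s i by (simp add: Wf_def f_def Dop_pow_fterm mult.commute)
  qed (use car in auto)
  have detDg: "det Dg = (\<Prod>i\<in>{0..<k}. f i)"
  proof -
    have "det Dg = prod_list (diag_mat Dg)"
      by (rule det_upper_triangular[OF _ car(5)]) (auto simp: Dg_def upper_triangular_def)
    also have "\<dots> = prod_list (map f [0..<k])"
      unfolding diag_mat_def using car(5) by (auto simp: Dg_def intro!: arg_cong[where f=prod_list])
    also have "\<dots> = (\<Prod>i\<in>{0..<k}. f i)"
      using prod.distinct_set_conv_list[of "[0..<k]" f] by simp
    finally show ?thesis .
  qed
  have fnz: "f i \<noteq> 0" for i by (simp add: f_def fterm_nz)
  have ordDg: "order 0 (det Dg) = (\<Sum>i\<in>{0..<k}. \<alpha> i)" and Dgnz: "det Dg \<noteq> 0"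
  proof -
    have "order 0 (\<Prod>i\<in>A. f i) = (\<Sum>i\<in>A. \<alpha> i) \<and> (\<Prod>i\<in>A. f i) \<noteq> 0" if "finite A" for A
      using that by (induction A rule: finite_induct) (auto simp: order_mult fterm_nz f_def order_fterm)
    then show "order 0 (det Dg) = (\<Sum>i\<in>{0..<k}. \<alpha> i)" "det Dg \<noteq> 0" unfolding detDg by auto
  qed
  have Cmnz: "det Cm \<noteq> 0"
  proof -
    have "det Cm = prod_list (diag_mat Cm)"
      by (rule det_lower_triangular[OF _ car(3)]) (auto simp: Cm_def low)
    moreover have "0 \<notin> set (diag_mat Cm)"
      using car(3) diag by (auto simp: diag_mat_def Cm_def)
    ultimately show ?thesis by (simp add: prod_list_zero_iff)
  qed
  have Cmdeg: "degree (det Cm) \<le> 0"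
    using degree_det_le[OF car(3), of "\<lambda>_. 0"] by (simp add: Cm_def)
  have Qmdeg: "degree (det Qm) \<le> (\<Sum>s\<in>{0..<k}. 2 * s)"
    by (rule degree_det_le[OF car(4)]) (simp add: Qm_def degree_Qs)
  have dete: "det Wg = det Qm * det Dg * det Cm"
    unfolding Wg_eq Wf_eq using car by (simp add: det_mult[of _ k])
  have dvdg: "[:0,1:] ^ e i dvd g i" for i unfolding e_def by (rule order_1[of 0, simplified])
  have DC: "[:0,1:] ^ (\<Sum>i\<in>{0..<k}. e i) dvd det Wg \<and>
         coeff (det Wg) (\<Sum>i\<in>{0..<k}. e i) = det (mat k k (\<lambda>(s,i). coeff (Wg $$ (s, i)) (e i)))"
    by (rule det_dvd_coeff[OF car(1)]) (simp add: Wg_def Dop_pow_dvd_coeff[OF dvdg])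
  have matc: "mat k k (\<lambda>(s,i). coeff (Wg $$ (s, i)) (e i)) =
      mat k k (\<lambda>(s,i). (of_nat (e i) * (t * w)) ^ s * coeff (g i) (e i))"
    by (rule eq_matI) (auto simp: Wg_def Dop_pow_dvd_coeff[OF dvdg])
  have injx: "inj_on (\<lambda>i. of_nat (e i) * (t * w)) {0..<k}"
  proof (rule inj_onI)
    fix i j assume ij: "i \<in> {0..<k}" "j \<in> {0..<k}" "of_nat (e i) * (t * w) = of_nat (e j) * (t * (w::'a))"
    then have "(of_nat (e i) :: 'a) = of_nat (e j)" using wt by (simp add: mult.commute)
    then have "e i = e j" by simp
    then show "i = j" using inj ij unfolding e_def by (auto dest: inj_onD)
  qed
  have "coeff (det Wg) (\<Sum>i\<in>{0..<k}. e i) \<noteq> 0"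
    unfolding conjunct2[OF DC] matc
    by (rule vandermonde_nz[OF injx]) (simp add: e_def coeff_order_nz gnz)
  then have Wgnz: "det Wg \<noteq> 0" by auto
  have "(\<Sum>i\<in>{0..<k}. e i) \<le> order 0 (det Wg)"
    using conjunct1[OF DC] Wgnz order_divides[of 0 "\<Sum>i\<in>{0..<k}. e i" "det Wg"] by simp
  also have "order 0 (det Wg) = order 0 (det Qm) + order 0 (det Dg) + order 0 (det Cm)"
    using Wgnz unfolding dete by (simp add: order_mult)
  also have "order 0 (det Qm) \<le> degree (det Qm)"
    using Wgnz dete by (intro order_degree) auto
  also have "order 0 (det Cm) \<le> degree (det Cm)"
    using Cmnz by (intro order_degree)
  finally show ?thesis using Qmdeg Cmdeg ordDg unfolding e_def by linarith
qed

lemma CASEB: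
  fixes \<alpha> \<beta> \<gamma> :: "nat \<Rightarrow> nat" and a :: "nat \<Rightarrow> 'a"
  defines "F \<equiv> (\<lambda>j. fterm (\<alpha> j) (\<beta> j) (\<gamma> j))"
  assumes ind: "indep F k" and k: "0 < k" and a0: "a 0 \<noteq> 0"
  shows "order 0 (comb F k a) \<le> \<alpha> 0 + (\<Sum>s\<in>{0..<k}. 2 * s)"
proof -
  define init where "init = (\<lambda>i j. if i = 0 then a j else (if j = i then 1 else (0::'a)))"
  have initd: "\<And>i. i < k \<Longrightarrow> init i i \<noteq> 0" using a0 by (simp add: init_def)
  have initl: "\<And>i j. i < k \<Longrightarrow> j < i \<Longrightarrow> init i j = 0" by (simp add: init_def)
  obtain C where C1: "\<forall>i. k - k \<le> i \<and> i < k \<longrightarrow> (\<forall>j\<le>i. C i j = init i j) \<and>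
            order 0 (comb F k (init i)) \<le> order 0 (comb F k (C i))"
    and C2: "\<forall>i i'. k - k \<le> i \<and> i < k \<and> k - k \<le> i' \<and> i' < k \<and> i \<noteq> i' \<longrightarrow>
            order 0 (comb F k (C i)) \<noteq> order 0 (comb F k (C i'))"
    using BUILD[where f=F and init=init and n=k, OF ind initd initl] by blast
  define g where "g = (\<lambda>i. comb F k (C i))"
  have GLr: "(\<Sum>i\<in>{0..<k}. order 0 (g i)) \<le> (\<Sum>i\<in>{0..<k}. \<alpha> i) + (\<Sum>s\<in>{0..<k}. 2 * s)"
  proof (rule GL[where C=C and \<beta>=\<beta> and \<gamma>=\<gamma>])
    show "g i = (\<Sum>j\<in>{0..<k}. smult (C i j) (fterm (\<alpha> j) (\<beta> j) (\<gamma> j)))" for i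
      by (simp add: g_def comb_def F_def)
    show "C i i \<noteq> 0" if "i < k" for i using C1 initd that by auto
    show "C i j = 0" if "i < k" "j < i" for i j using C1 initl that by auto
    show "g i \<noteq> 0" if "i < k" for i
      unfolding g_def using comb_nz[OF ind that, of "C i"] C1 initd that by auto
    show "inj_on (\<lambda>i. order 0 (g i)) {0..<k}"
    proof (rule inj_onI)
      fix x y assume xy: "x \<in> {0..<k}" "y \<in> {0..<k}" "order 0 (g x) = order 0 (g y)"
      show "x = y"
      proof (rule ccontr)
        assume "x \<noteq> y"
        with C2 xy show False unfolding g_def by auto
      qed
    qed
  qed
  have lb0: "order 0 (comb F k a) \<le> order 0 (g 0)"
  proof -
    have "init 0 = a" by (auto simp: init_def)
    then show ?thesis using C1 k unfolding g_def by auto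
  qed
  have lbi: "\<alpha> i \<le> order 0 (g i)" if "Suc 0 \<le> i" "i < k" for i
  proof -
    have "comb F k (init i) = F i"
      unfolding comb_def init_def using that by (simp add: if_distrib[of "\<lambda>x. smult x _"] cong: if_cong)
    then have "order 0 (comb F k (init i)) = \<alpha> i" by (simp add: F_def order_fterm)
    then show ?thesis using C1 that unfolding g_def by auto
  qed
  have s1: "(\<Sum>i\<in>{0..<k}. order 0 (g i)) = order 0 (g 0) + (\<Sum>i\<in>{Suc 0..<k}. order 0 (g i))"
    using k by (simp add: sum.atLeast_Suc_lessThan)
  have s2: "(\<Sum>i\<in>{0..<k}. \<alpha> i) = \<alpha> 0 + (\<Sum>i\<in>{Suc 0..<k}. \<alpha> i)"
    using k by (simp add: sum.atLeast_Suc_lessThan)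
  have s3: "(\<Sum>i\<in>{Suc 0..<k}. \<alpha> i) \<le> (\<Sum>i\<in>{Suc 0..<k}. order 0 (g i))"
    by (rule sum_mono) (use lbi in auto)
  show ?thesis using GLr s1 s2 s3 lb0 by linarith
qed

lemma MAIN:
  fixes \<alpha> \<beta> \<gamma> :: "nat \<Rightarrow> nat" and a :: "nat \<Rightarrow> 'a"
  shows "comb (\<lambda>j. fterm (\<alpha> j) (\<beta> j) (\<gamma> j)) k a \<noteq> 0 \<Longrightarrow>
    \<exists>j<k. order 0 (comb (\<lambda>j. fterm (\<alpha> j) (\<beta> j) (\<gamma> j)) k a) \<le> \<alpha> j + (\<Sum>s\<in>{0..<k-j}. 2 * s)"
proof (induction k arbitrary: \<alpha> \<beta> \<gamma> a)
  case 0
  then show ?case by (simp add: comb_def)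
next
  case (Suc k)
  define F where "F = (\<lambda>j. fterm (\<alpha> j) (\<beta> j) (\<gamma> j))"
  define P where "P = comb F (Suc k) a"
  have Pnz: "P \<noteq> 0" using Suc.prems by (simp add: P_def F_def)
  have case1: "\<exists>j<Suc k. order 0 P \<le> \<alpha> j + (\<Sum>s\<in>{0..<Suc k-j}. 2 * s)"
    if i: "i < Suc k" and a': "P = (\<Sum>j\<in>{0..<Suc k}-{i}. smult (a' j) (F j))" for i a'
  proof -
    define \<sigma> where "\<sigma> = (\<lambda>j. if j < i then j else Suc j)"
    have bij: "bij_betw \<sigma> {0..<k} ({0..<Suc k}-{i})"
      by (rule bij_betw_byWitness[where f'="\<lambda>j. if j < i then j else j - 1"]) (use i in \<open>auto simp: \<sigma>_def\<close>)
    have Pe: "P = comb (\<lambda>j. fterm ((\<alpha> \<circ> \<sigma>) j) ((\<beta> \<circ> \<sigma>) j) ((\<gamma> \<circ> \<sigma>) j)) k (\<lambda>j. a' (\<sigma> j))"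
      unfolding a' comb_def using sum.reindex_bij_betw[OF bij, of "\<lambda>j. smult (a' j) (F j)"]
      by (simp add: F_def)
    from Suc.IH[of "\<alpha> \<circ> \<sigma>" "\<beta> \<circ> \<sigma>" "\<gamma> \<circ> \<sigma>" "\<lambda>j. a' (\<sigma> j)"] Pnz Pe
    obtain j where j: "j < k" "order 0 P \<le> \<alpha> (\<sigma> j) + (\<Sum>s\<in>{0..<k-j}. 2 * s)"
      by auto
    have sj: "\<sigma> j < Suc k" "k - j \<le> Suc k - \<sigma> j" using j(1) by (auto simp: \<sigma>_def)
    have "(\<Sum>s\<in>{0..<k-j}. 2 * s) \<le> (\<Sum>s\<in>{0..<Suc k - \<sigma> j}. 2 * s)"
      by (rule sum_mono2) (use sj in auto)
    then show ?thesis using j sj by (intro exI[of _ "\<sigma> j"]) auto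
  qed
  show ?case
  proof (cases "a 0 = 0")
    case True
    have "(\<Sum>j\<in>{0..<Suc k}. smult (a j) (F j)) = smult (a 0) (F 0) + (\<Sum>j\<in>{0..<Suc k}-{0}. smult (a j) (F j))"
      by (rule sum.remove) auto
    then have "P = (\<Sum>j\<in>{0..<Suc k}-{0}. smult (a j) (F j))"
      unfolding P_def comb_def using True by simp
    from case1[OF _ this] show ?thesis by (simp add: P_def F_def)
  next
    case a0: False
    show ?thesis
    proof (cases "indep F (Suc k)")
      case True
      from CASEB[where \<alpha>=\<alpha> and \<beta>=\<beta> and \<gamma>=\<gamma> and k="Suc k" and a=a, OF True[unfolded F_def] _ a0] show ?thesis
        by (intro exI[of _ 0]) (simp add: F_def)
    next
      case False
      then obtain c i where c: "comb F (Suc k) c = 0" and i: "i < Suc k" "c i \<noteq> 0"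
        unfolding indep_def by auto
      define a' where "a' = (\<lambda>j. a j - (a i / c i) * c j)"
      have "comb F (Suc k) a' = P" unfolding a'_def P_def comb_diff_smult c by simp
      moreover have "a' i = 0" using i by (simp add: a'_def)
      moreover have "(\<Sum>j\<in>{0..<Suc k}. smult (a' j) (F j)) = smult (a' i) (F i) + (\<Sum>j\<in>{0..<Suc k}-{i}. smult (a' j) (F j))"
        by (rule sum.remove) (use i in auto)
      ultimately have "P = (\<Sum>j\<in>{0..<Suc k}-{i}. smult (a' j) (F j))"
        unfolding comb_def by simp
      from case1[OF i(1) this] show ?thesis by (simp add: P_def F_def)
    qed
  qed
qed

end

lemma val_order: "P \<noteq> 0 \<Longrightarrow> val P = order 0 P"
  unfolding val_def
proof (rule Greatest_equality)
  show "[:0,1:] ^ order 0 P dvd P" using order_1[of 0 P] by simp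
  show "y \<le> order 0 P" if "P \<noteq> 0" "[:0,1:] ^ y dvd P" for y
    using that order_divides[of 0 y P] by simp
qed

lemma sum_twice: "(\<Sum>s\<in>{0..<n}. 2 * s) = 2 * (n choose 2)"
proof (induction n)
  case (Suc n)
  have "Suc n choose 2 = (n choose 2) + n"
    using binomial_Suc_Suc[of n 1] by (simp add: numeral_2_eq_2)
  then show ?case using Suc by simp
qed simp

theorem corollary2p7:
  fixes u v t w :: "'a::field_char_0"
    and a :: "nat \<Rightarrow> 'a"
    and \<alpha> \<beta> \<gamma> :: "nat \<Rightarrow> nat"
    and l :: nat and P :: "'a poly"
  assumes wt: "w * t \<noteq> 0"
    and mono: "\<And>i j. 1 \<le> i \<Longrightarrow> i \<le> j \<Longrightarrow> j \<le> l \<Longrightarrow> \<alpha> i \<le> \<alpha> j"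
    and P_def: "P = (\<Sum>j=1..l. smult (a j)
                     ([:0, 1:] ^ \<alpha> j * [:t, v:] ^ \<beta> j * [:w, u:] ^ \<gamma> j))"
    and nz: "P \<noteq> 0"
  shows "val P \<le> Max ((\<lambda>j. \<alpha> j + 2 * ((l + 1 - j) choose 2)) ` {1..l})"
proof -
  interpret wr u v t w using wt by unfold_locales
  have Pe: "P = comb (\<lambda>j. fterm (\<alpha> (Suc j)) (\<beta> (Suc j)) (\<gamma> (Suc j))) l (\<lambda>j. a (Suc j))"
    unfolding P_def comb_def fterm_def
    using sum.atLeast1_atMost_eq[of "\<lambda>j. smult (a j) ([:0, 1:] ^ \<alpha> j * [:t, v:] ^ \<beta> j * [:w, u:] ^ \<gamma> j)" l]
    by (simp add: atLeast0LessThan)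
  obtain j where j: "j < l" "order 0 P \<le> \<alpha> (Suc j) + (\<Sum>s\<in>{0..<l-j}. 2 * s)"
    using MAIN[of "\<lambda>j. \<alpha> (Suc j)" "\<lambda>j. \<beta> (Suc j)" "\<lambda>j. \<gamma> (Suc j)" l "\<lambda>j. a (Suc j)"] nz Pe by auto
  have "val P \<le> \<alpha> (Suc j) + 2 * ((l + 1 - Suc j) choose 2)"
    using j val_order[OF nz] sum_twice[of "l - j"] by simp
  also have "\<dots> \<le> Max ((\<lambda>j. \<alpha> j + 2 * ((l + 1 - j) choose 2)) ` {1..l})"
    by (rule Max_ge) (use j in \<open>auto intro!: image_eqI[where x="Suc j"]\<close>)
  finally show ?thesis .
qed

end
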